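(* If $n\equiv 2\pmod 4$, then the graph $2Q_{n-1}$ is $\left(\frac{n(2^n+1)}{2}-2^n,\,1\right)$-distance antimagic. If $n\equiv 1\pmod 4$, then $2Q_{n-1}$ is $\left(\frac{(n+1)(2^n+1)}{2}-2^n,\,1\right)$-closed distance antimagic.
   Context: $Q_m$ is the $m$-dimensional hypercube (vertex set $\mathbb{F}_2^m$, adjacency iff differing in exactly one coordinate), and $2Q_{n-1}$ is the disjoint union of two copies of $Q_{n-1}$, a graph of order $2^n$. For a graph $G$ of order $N$, a set of distances $D$, and a bijection $f:V(G)\to\{1,\dots,N\}$, the weight of $x$ is $w(x)=\sum_{y\in N_D(x)}f(y)$ where $N_D(x)$ is the set of vertices at distance in $D$ from $x$. $f$ is an $(\alpha,\delta)$-$D$-antimagic labeling if the weights are pairwise distinct and $\{w(x)\}$ forms an arithmetic progression starting at $\alpha$ with difference $\delta>0$; a graph is $(\alpha,\delta)$-distance antimagic (resp. $(\alpha,\delta)$-closed distance antimagic) if it admits such a labeling with $D=\{1\}$ (resp. $D=\{0,1\}$). *)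

theory Defs
  imports Main
begin

definition has_walk :: "'a set \<Rightarrow> ('a \<Rightarrow> 'a \<Rightarrow> bool) \<Rightarrow> 'a \<Rightarrow> 'a \<Rightarrow> nat \<Rightarrow> bool" where
  "has_walk V E x y k \<longleftrightarrow>
     (\<exists>p. p 0 = x \<and> p k = y \<and> (\<forall>i\<le>k. p i \<in> V) \<and> (\<forall>i<k. E (p i) (p (Suc i))))"

definition dist_is :: "'a set \<Rightarrow> ('a \<Rightarrow> 'a \<Rightarrow> bool) \<Rightarrow> 'a \<Rightarrow> 'a \<Rightarrow> nat \<Rightarrow> bool" where
  "dist_is V E x y d \<longleftrightarrow> has_walk V E x y d \<and> (\<forall>k<d. \<not> has_walk V E x y k)"

definition dist_nbhd :: "'a set \<Rightarrow> ('a \<Rightarrow> 'a \<Rightarrow> bool) \<Rightarrow> nat set \<Rightarrow> 'a \<Rightarrow> 'a set" where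
  "dist_nbhd V E D x = {y \<in> V. \<exists>d\<in>D. dist_is V E x y d}"

definition weight :: "'a set \<Rightarrow> ('a \<Rightarrow> 'a \<Rightarrow> bool) \<Rightarrow> nat set \<Rightarrow> ('a \<Rightarrow> nat) \<Rightarrow> 'a \<Rightarrow> int" where
  "weight V E D f x = (\<Sum>y\<in>dist_nbhd V E D x. int (f y))"

definition D_antimagic_labeling ::
  "'a set \<Rightarrow> ('a \<Rightarrow> 'a \<Rightarrow> bool) \<Rightarrow> nat set \<Rightarrow> ('a \<Rightarrow> nat) \<Rightarrow> int \<Rightarrow> int \<Rightarrow> bool" where
  "D_antimagic_labeling V E D f \<alpha> \<delta> \<longleftrightarrow>
     bij_betw f V {1..card V} \<and> \<delta> > 0 \<and>
     inj_on (weight V E D f) V \<and>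
     weight V E D f ` V = {\<alpha> + int k * \<delta> | k. k < card V}"

definition distance_antimagic :: "'a set \<Rightarrow> ('a \<Rightarrow> 'a \<Rightarrow> bool) \<Rightarrow> int \<Rightarrow> int \<Rightarrow> bool" where
  "distance_antimagic V E \<alpha> \<delta> \<longleftrightarrow> (\<exists>f. D_antimagic_labeling V E {1} f \<alpha> \<delta>)"

definition closed_distance_antimagic :: "'a set \<Rightarrow> ('a \<Rightarrow> 'a \<Rightarrow> bool) \<Rightarrow> int \<Rightarrow> int \<Rightarrow> bool" where
  "closed_distance_antimagic V E \<alpha> \<delta> \<longleftrightarrow> (\<exists>f. D_antimagic_labeling V E {0,1} f \<alpha> \<delta>)"

text \<open>Q_m: vertices are subsets of {0..<m} (characteristic vectors in F_2^m);
  adjacent iff they differ in exactly one coordinate.\<close>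
definition hypercube_verts :: "nat \<Rightarrow> nat set set" where
  "hypercube_verts m = Pow {..<m}"

definition hypercube_adj :: "nat set \<Rightarrow> nat set \<Rightarrow> bool" where
  "hypercube_adj A B \<longleftrightarrow> card ((A - B) \<union> (B - A)) = 1"

definition twoQ_verts :: "nat \<Rightarrow> (bool \<times> nat set) set" where
  "twoQ_verts m = UNIV \<times> hypercube_verts m"

definition twoQ_adj :: "bool \<times> nat set \<Rightarrow> bool \<times> nat set \<Rightarrow> bool" where
  "twoQ_adj u v \<longleftrightarrow> fst u = fst v \<and> hypercube_adj (snd u) (snd v)"

end

theory Submission
  imports Defs
begin

definition flip :: "nat \<Rightarrow> nat set \<Rightarrow> nat set" where
  "flip i x = (if i \<in> x then x - {i} else insert i x)"

lemma has_walk_0: "has_walk V E x y 0 \<longleftrightarrow> x = y \<and> x \<in> V"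
  unfolding has_walk_def by auto

lemma has_walk_1: "has_walk V E x y 1 \<longleftrightarrow> x \<in> V \<and> y \<in> V \<and> E x y"
proof
  assume "has_walk V E x y 1" then show "x \<in> V \<and> y \<in> V \<and> E x y"
    unfolding has_walk_def by (metis One_nat_def le_refl lessI zero_le)
next
  assume h: "x \<in> V \<and> y \<in> V \<and> E x y"
  show "has_walk V E x y 1" unfolding has_walk_def
    by (rule exI[of _ "\<lambda>k. if k = 0 then x else y"]) (use h in \<open>auto simp: le_Suc_eq\<close>)
qed

lemma flip_ne: "flip i x \<noteq> x" unfolding flip_def by auto

lemma flip_sub: "x \<subseteq> {..<m} \<Longrightarrow> i < m \<Longrightarrow> flip i x \<subseteq> {..<m}"
  unfolding flip_def by auto

lemma flip_inj: "flip i x = flip j x \<Longrightarrow> i = j"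
  unfolding flip_def by (auto split: if_splits)

lemma a1: "card ((x - y) \<union> (y - x)) = 1 \<Longrightarrow> \<exists>i. (x - y) \<union> (y - x) = {i}"
  using card_1_singleton_iff[of "(x - y) \<union> (y - x)"] by simp
lemma a2: "(x::nat set) \<subseteq> {..<m} \<Longrightarrow> y \<subseteq> {..<m} \<Longrightarrow> (x - y) \<union> (y - x) = {i} \<Longrightarrow> i < m"
  by (metis Un_subset_iff Diff_subset insert_subset subset_trans lessThan_iff)
lemma a3: assumes "(x - y) \<union> (y - x) = {i}" "i \<in> x" shows "y = x - {i}"
proof (rule set_eqI)
  fix z show "z \<in> y \<longleftrightarrow> z \<in> x - {i}"
    using assms(2) set_eq_iff[THEN iffD1, OF assms(1), rule_format, of z] by auto
qed
lemma a4: assumes "(x - y) \<union> (y - x) = {i}" "i \<notin> x" shows "y = insert i x"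
proof (rule set_eqI)
  fix z show "z \<in> y \<longleftrightarrow> z \<in> insert i x"
    using assms(2) set_eq_iff[THEN iffD1, OF assms(1), rule_format, of z] by auto
qed
lemma a5: "y = flip i x \<Longrightarrow> (x - y) \<union> (y - x) = {i}" unfolding flip_def by auto

lemma adj_iff:
  assumes "x \<subseteq> {..<m}" "y \<subseteq> {..<m}"
  shows "hypercube_adj x y \<longleftrightarrow> (\<exists>i<m. y = flip i x)"
proof
  assume "hypercube_adj x y"
  then have "card ((x - y) \<union> (y - x)) = 1" unfolding hypercube_adj_def .
  then obtain i where i: "(x - y) \<union> (y - x) = {i}" using a1 by metis
  then have "i < m" using a2[OF assms] by metis
  moreover have "y = flip i x"
  proof (cases "i \<in> x")
    case True
    then have "y = x - {i}" using a3[OF i] by metis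
    then show ?thesis using True unfolding flip_def by simp
  next
    case False
    then have "y = insert i x" using a4[OF i] by metis
    then show ?thesis using False unfolding flip_def by simp
  qed
  ultimately show "\<exists>i<m. y = flip i x" by metis
next
  assume "\<exists>i<m. y = flip i x"
  then obtain i where "y = flip i x" by metis
  then have "(x - y) \<union> (y - x) = {i}" by (rule a5)
  then show "hypercube_adj x y" unfolding hypercube_adj_def by simp
qed

lemma dist1_iff: "dist_is V E x y 1 \<longleftrightarrow> x \<in> V \<and> y \<in> V \<and> E x y \<and> x \<noteq> y"
proof -
  have "(\<forall>k<1. \<not> has_walk V E x y k) \<longleftrightarrow> \<not> has_walk V E x y 0" by simp
  then show ?thesis unfolding dist_is_def has_walk_1 has_walk_0 by blast
qed

lemma dist0_iff: "dist_is V E x y 0 \<longleftrightarrow> x \<in> V \<and> x = y"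
  unfolding dist_is_def has_walk_0 by blast

lemma nbhd1:
  assumes "v \<in> twoQ_verts m"
  shows "dist_nbhd (twoQ_verts m) twoQ_adj {1} v = (\<lambda>i. (fst v, flip i (snd v))) ` {..<m}"
proof -
  have vs: "snd v \<subseteq> {..<m}" using assms by (auto simp: twoQ_verts_def hypercube_verts_def)
  have eq: "dist_nbhd (twoQ_verts m) twoQ_adj {1} v = {y \<in> twoQ_verts m. twoQ_adj v y \<and> v \<noteq> y}"
    unfolding dist_nbhd_def using assms by (simp del: One_nat_def add: dist1_iff)
  show ?thesis unfolding eq
  proof (intro set_eqI iffI)
    fix y assume "y \<in> {y \<in> twoQ_verts m. twoQ_adj v y \<and> v \<noteq> y}"
    then have y: "y \<in> twoQ_verts m" "twoQ_adj v y" by auto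
    then have "snd y \<subseteq> {..<m}" by (auto simp: twoQ_verts_def hypercube_verts_def)
    then obtain i where i: "i < m" "snd y = flip i (snd v)" using y(2) adj_iff[OF vs]
      unfolding twoQ_adj_def by blast
    have "y = (fst v, flip i (snd v))" using i(2) y(2) unfolding twoQ_adj_def
      by (simp add: prod_eq_iff)
    then show "y \<in> (\<lambda>i. (fst v, flip i (snd v))) ` {..<m}" using i(1) by blast
  next
    fix y assume "y \<in> (\<lambda>i. (fst v, flip i (snd v))) ` {..<m}"
    then obtain i where i: "i < m" "y = (fst v, flip i (snd v))" by auto
    have yv: "y \<in> twoQ_verts m" using i flip_sub[OF vs]
      by (auto simp: twoQ_verts_def hypercube_verts_def)
    have adj: "twoQ_adj v y" using i adj_iff[OF vs flip_sub[OF vs i(1)]]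
      unfolding twoQ_adj_def by auto
    have "y \<noteq> v" using i flip_ne by (metis snd_conv)
    then show "y \<in> {y \<in> twoQ_verts m. twoQ_adj v y \<and> v \<noteq> y}"
      using yv adj by simp
  qed
qed

lemma nbhd01:
  assumes "v \<in> twoQ_verts m"
  shows "dist_nbhd (twoQ_verts m) twoQ_adj {0,1} v = insert v ((\<lambda>i. (fst v, flip i (snd v))) ` {..<m})"
proof -
  have "dist_nbhd (twoQ_verts m) twoQ_adj {0,1} v = dist_nbhd (twoQ_verts m) twoQ_adj {0} v
     \<union> dist_nbhd (twoQ_verts m) twoQ_adj {1} v" unfolding dist_nbhd_def by auto
  moreover have "dist_nbhd (twoQ_verts m) twoQ_adj {0} v = {v}"
    unfolding dist_nbhd_def using assms by (auto simp: dist0_iff)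
  ultimately show ?thesis using nbhd1[OF assms] by auto
qed

lemma weight1:
  assumes "v \<in> twoQ_verts m"
  shows "weight (twoQ_verts m) twoQ_adj {1} f v = (\<Sum>i<m. int (f (fst v, flip i (snd v))))"
  unfolding weight_def nbhd1[OF assms]
  by (subst sum.reindex) (auto simp: inj_on_def dest: flip_inj)

lemma weight01:
  assumes "v \<in> twoQ_verts m"
  shows "weight (twoQ_verts m) twoQ_adj {0,1} f v = int (f v) + (\<Sum>i<m. int (f (fst v, flip i (snd v))))"
proof -
  have "v \<notin> (\<lambda>i. (fst v, flip i (snd v))) ` {..<m}" using flip_ne by (metis (no_types, lifting) imageE snd_conv)
  then show ?thesis
  proof -
    have inj: "inj_on (\<lambda>i. (fst v, flip i (snd v))) {..<m}"
      by (auto simp: inj_on_def dest: flip_inj)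
    have "weight (twoQ_verts m) twoQ_adj {0,1} f v
        = (\<Sum>y\<in>insert v ((\<lambda>i. (fst v, flip i (snd v))) ` {..<m}). int (f y))"
      by (simp only: weight_def nbhd01[OF assms])
    also have "\<dots> = int (f v) + (\<Sum>y\<in>(\<lambda>i. (fst v, flip i (snd v))) ` {..<m}. int (f y))"
      by (rule sum.insert) (use \<open>v \<notin> _\<close> in auto)
    also have "\<dots> = int (f v) + (\<Sum>i<m. int (f (fst v, flip i (snd v))))"
      using sum.reindex_cong[OF inj refl refl, of "\<lambda>y. int (f y)"] by simp
    finally show ?thesis .
  qed
qed

definition Sset :: "nat \<Rightarrow> nat \<Rightarrow> nat \<Rightarrow> nat set" where
  "Sset r m k = (if k < m then (if k < r then insert k {r..<2*r} else insert k {..<r}) else {..<r})"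

definition bitv :: "nat \<Rightarrow> nat \<Rightarrow> nat \<Rightarrow> bool \<times> nat set \<Rightarrow> bool" where
  "bitv r m k v = ((k = m \<and> fst v) \<noteq> odd (card (snd v \<inter> Sset r m k)))"

lemma par_insert:
  assumes "finite S" "i \<notin> S"
  shows "odd (card (x \<inter> insert i S)) = ((i \<in> x) \<noteq> odd (card (x \<inter> S)))"
proof (cases "i \<in> x")
  case True
  then have "x \<inter> insert i S = insert i (x \<inter> S)" by auto
  then show ?thesis using assms True by simp
next
  case False
  then have "x \<inter> insert i S = x \<inter> S" by auto
  then show ?thesis using False by simp
qed

lemma par_flip:
  assumes "finite S"
  shows "odd (card (flip i x \<inter> S)) = (if i \<in> S then \<not> odd (card (x \<inter> S)) else odd (card (x \<inter> S)))"
proof (cases "i \<in> S")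
  case False
  then have "flip i x \<inter> S = x \<inter> S" unfolding flip_def by auto
  then show ?thesis using False by simp
next
  case iS: True
  show ?thesis
  proof (cases "i \<in> x")
    case True
    then have "flip i x \<inter> S = (x \<inter> S) - {i}" unfolding flip_def by auto
    moreover have "card ((x \<inter> S) - {i}) = card (x \<inter> S) - 1" using True iS by simp
    moreover have "card (x \<inter> S) \<ge> 1" using True iS assms
      by (metis IntI One_nat_def Suc_leI card_gt_0_iff empty_iff finite_Int)
    ultimately show ?thesis using iS by simp
  next
    case False
    then have "flip i x \<inter> S = insert i (x \<inter> S)" unfolding flip_def using iS by auto
    then show ?thesis using iS False assms by simp
  qed
qed

lemma count_flip:
  assumes "S \<subseteq> {..<m}"
  shows "card {i \<in> {..<m}. c \<noteq> odd (card (flip i x \<inter> S))}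
      = (if c \<noteq> odd (card (x \<inter> S)) then m - card S else card S)"
proof -
  have fS: "finite S" using assms finite_subset by blast
  have "{i \<in> {..<m}. c \<noteq> odd (card (flip i x \<inter> S))}
      = (if c \<noteq> odd (card (x \<inter> S)) then {..<m} - S else S)"
    using assms by (auto simp: par_flip[OF fS])
  then show ?thesis using assms fS by (simp add: card_Diff_subset)
qed

lemma Sset_sub: "2 * r \<le> m \<Longrightarrow> k \<le> m \<Longrightarrow> Sset r m k \<subseteq> {..<m}"
  unfolding Sset_def by auto

lemma Sset_card: "2 * r \<le> m \<Longrightarrow> card (Sset r m k) = (if k < m then r + 1 else r)"
  unfolding Sset_def by auto

definition lab :: "nat \<Rightarrow> nat \<Rightarrow> bool \<times> nat set \<Rightarrow> nat" where
  "lab r m v = Suc (\<Sum>k<Suc m. 2^k * (if bitv r m k v then 1 else 0))"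

lemma sum_ind: "finite A \<Longrightarrow> (\<Sum>i\<in>A. (if P i then 1 else 0::nat)) = card {i \<in> A. P i}"
  by (simp add: sum.inter_filter[symmetric])

lemma nb_sum:
  assumes "2 * r \<le> m"
  shows "(\<Sum>i<m. lab r m (c, flip i x)) = m + (\<Sum>k<Suc m. 2^k *
      (if bitv r m k (c, x) then m - card (Sset r m k) else card (Sset r m k)))"
proof -
  have "(\<Sum>i<m. lab r m (c, flip i x)) = (\<Sum>i<m. 1 + (\<Sum>k<Suc m. 2^k * (if bitv r m k (c, flip i x) then 1 else 0)))"
    unfolding lab_def by simp
  also have "\<dots> = m + (\<Sum>i<m. \<Sum>k<Suc m. 2^k * (if bitv r m k (c, flip i x) then 1 else 0))"
    by (simp only: sum.distrib) simp
  also have "(\<Sum>i<m. \<Sum>k<Suc m. 2^k * (if bitv r m k (c, flip i x) then 1 else 0))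
      = (\<Sum>k<Suc m. \<Sum>i<m. 2^k * (if bitv r m k (c, flip i x) then 1 else 0))"
    by (rule sum.swap)
  also have "\<dots> = (\<Sum>k<Suc m. (2::nat)^k * (\<Sum>i<m. (if bitv r m k (c, flip i x) then 1 else 0)))"
    by (simp add: sum_distrib_left)
  also have "\<dots> = (\<Sum>k<Suc m. 2^k *
      (if bitv r m k (c, x) then m - card (Sset r m k) else card (Sset r m k)))"
  proof (rule sum.cong[OF refl])
    fix k assume "k \<in> {..<Suc m}"
    then have sub: "Sset r m k \<subseteq> {..<m}" using Sset_sub[OF assms] by simp
    have "(\<Sum>i<m. (if bitv r m k (c, flip i x) then 1 else 0::nat))
        = card {i \<in> {..<m}. (k = m \<and> c) \<noteq> odd (card (flip i x \<inter> Sset r m k))}"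
      unfolding bitv_def by (simp add: sum_ind)
    also have "\<dots> = (if bitv r m k (c, x) then m - card (Sset r m k) else card (Sset r m k))"
      unfolding count_flip[OF sub] bitv_def by simp
    finally show "2^k * (\<Sum>i<m. (if bitv r m k (c, flip i x) then 1 else 0::nat)) = 2^k *
      (if bitv r m k (c, x) then m - card (Sset r m k) else card (Sset r m k))" by simp
  qed
  finally show ?thesis .
qed

definition g :: "nat \<Rightarrow> nat \<Rightarrow> bool \<times> nat set \<Rightarrow> nat" where
  "g r m v = (\<Sum>k<Suc m. 2^k * (if (bitv r m k v \<longleftrightarrow> k = m) then 1 else 0))"

lemma geo: "(\<Sum>k<n. (2::nat)^k) + 1 = 2^n"
  by (induction n) auto

lemma wdist:
  assumes "m = 2 * r + 1"
  shows "(\<Sum>i<m. lab r m (c, flip i x)) = m + r * (\<Sum>k<Suc m. 2^k) + g r m (c, x)"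
proof -
  have "(\<Sum>i<m. lab r m (c, flip i x)) = m + (\<Sum>k<Suc m. 2^k *
      (if bitv r m k (c, x) then m - card (Sset r m k) else card (Sset r m k)))"
    by (rule nb_sum) (use assms in simp)
  also have "(\<Sum>k<Suc m. 2^k *
      (if bitv r m k (c, x) then m - card (Sset r m k) else card (Sset r m k)))
     = (\<Sum>k<Suc m. r * 2^k + 2^k * (if (bitv r m k (c, x) \<longleftrightarrow> k = m) then 1 else 0))"
  proof (rule sum.cong[OF refl])
    fix k assume "k \<in> {..<Suc m}"
    then have "k \<le> m" by simp
    then show "2^k * (if bitv r m k (c, x) then m - card (Sset r m k) else card (Sset r m k))
       = r * 2^k + 2^k * (if (bitv r m k (c, x) \<longleftrightarrow> k = m) then 1 else (0::nat))"
      using assms by (auto simp: Sset_card)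
  qed
  also have "\<dots> = r * (\<Sum>k<Suc m. 2^k) + g r m (c, x)"
    unfolding g_def by (simp add: sum.distrib sum_distrib_left distrib_left)
  finally show ?thesis by simp
qed

lemma wclosed:
  assumes "m = 2 * r"
  shows "lab r m (c, x) + (\<Sum>i<m. lab r m (c, flip i x)) = m + 1 + r * (\<Sum>k<Suc m. 2^k) + g r m (c, x)"
proof -
  have "(\<Sum>i<m. lab r m (c, flip i x)) = m + (\<Sum>k<Suc m. 2^k *
      (if bitv r m k (c, x) then m - card (Sset r m k) else card (Sset r m k)))"
    by (rule nb_sum) (use assms in simp)
  moreover have "lab r m (c, x) = 1 + (\<Sum>k<Suc m. 2^k * (if bitv r m k (c,x) then 1 else 0))"
    unfolding lab_def by simp
  ultimately have "lab r m (c, x) + (\<Sum>i<m. lab r m (c, flip i x)) = m + 1 +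
     (\<Sum>k<Suc m. 2^k * (if bitv r m k (c,x) then 1 else 0) + 2^k *
      (if bitv r m k (c, x) then m - card (Sset r m k) else card (Sset r m k)))"
    by (simp add: sum.distrib)
  also have "(\<Sum>k<Suc m. 2^k * (if bitv r m k (c,x) then 1 else 0) + 2^k *
      (if bitv r m k (c, x) then m - card (Sset r m k) else card (Sset r m k)))
     = (\<Sum>k<Suc m. r * 2^k + 2^k * (if (bitv r m k (c, x) \<longleftrightarrow> k = m) then 1 else 0))"
  proof (rule sum.cong[OF refl])
    fix k assume "k \<in> {..<Suc m}"
    then have "k \<le> m" by simp
    then show "2^k * (if bitv r m k (c,x) then 1 else 0) + 2^k * (if bitv r m k (c, x) then m - card (Sset r m k) else card (Sset r m k))
       = r * 2^k + 2^k * (if (bitv r m k (c, x) \<longleftrightarrow> k = m) then 1 else (0::nat))"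
      using assms by (auto simp: Sset_card algebra_simps)
  qed
  also have "\<dots> = r * (\<Sum>k<Suc m. 2^k) + g r m (c, x)"
    unfolding g_def by (simp add: sum.distrib sum_distrib_left distrib_left)
  finally show ?thesis by simp
qed

lemma bin_lt: "(\<Sum>k<n. 2^k * (if a k then 1 else 0::nat)) < 2^n"
proof (induction n)
  case (Suc n) then show ?case by simp
qed simp

lemma bin_eq:
  "(\<Sum>k<n. 2^k * (if a k then 1 else 0::nat)) = (\<Sum>k<n. 2^k * (if b k then 1 else 0::nat))
   \<Longrightarrow> k < n \<Longrightarrow> a k = b k"
proof (induction n arbitrary: k)
  case 0 then show ?case by simp
next
  case (Suc n)
  have la: "(\<Sum>k<n. 2^k * (if a k then 1 else 0::nat)) < 2^n" by (rule bin_lt)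
  have lb: "(\<Sum>k<n. 2^k * (if b k then 1 else 0::nat)) < 2^n" by (rule bin_lt)
  have e: "(\<Sum>k<n. 2^k * (if a k then 1 else 0::nat)) + 2^n * (if a n then 1 else 0)
     = (\<Sum>k<n. 2^k * (if b k then 1 else 0::nat)) + 2^n * (if b n then 1 else 0)"
    using Suc.prems(1) by simp
  have an: "a n = b n"
  proof (rule ccontr)
    assume "a n \<noteq> b n"
    then show False using e la lb by (cases "a n") auto
  qed
  then have "(\<Sum>k<n. 2^k * (if a k then 1 else 0::nat)) = (\<Sum>k<n. 2^k * (if b k then 1 else 0::nat))"
    using e by simp
  then show ?case using Suc.IH an Suc.prems(2) by (cases "k = n") auto
qed

lemma bin_bij:
  assumes "finite V" "card V = 2^n"
    and inj: "\<And>v w. v \<in> V \<Longrightarrow> w \<in> V \<Longrightarrow> (\<forall>k<n. a v k = a w k) \<Longrightarrow> v = w"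
  shows "bij_betw (\<lambda>v. \<Sum>k<n. 2^k * (if a v k then 1 else 0::nat)) V {..<2^n}"
proof -
  let ?h = "\<lambda>v. \<Sum>k<n. 2^k * (if a v k then 1 else 0::nat)"
  have i: "inj_on ?h V"
  proof (rule inj_onI)
    fix v w assume "v \<in> V" "w \<in> V" "?h v = ?h w"
    then show "v = w" using inj bin_eq[where n=n and a="a v" and b="a w"] by blast
  qed
  have sub: "?h ` V \<subseteq> {..<2^n}" using bin_lt by auto
  have "card (?h ` V) = card {..<(2::nat)^n}" using card_image[OF i] assms(2) by simp
  then have "?h ` V = {..<2^n}" using sub by (simp add: card_subset_eq)
  then show ?thesis using i unfolding bij_betw_def by blast
qed

lemma recover:
  assumes r: "even r" "2 * r \<le> m" and vw: "v \<in> twoQ_verts m" "w \<in> twoQ_verts m"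
    and b: "\<forall>k<Suc m. bitv r m k v = bitv r m k w"
  shows "v = w"
proof -
  obtain c x where v: "v = (c, x)" by (cases v)
  obtain c' x' where w: "w = (c', x')" by (cases w)
  have xs: "x \<subseteq> {..<m}" "x' \<subseteq> {..<m}" using vw v w
    by (auto simp: twoQ_verts_def hypercube_verts_def)
  define a where "a = odd (card (x \<inter> {..<r}))"
  define a' where "a' = odd (card (x' \<inter> {..<r}))"
  have hi: "((i \<in> x) \<noteq> a) = ((i \<in> x') \<noteq> a')" if "r \<le> i" "i < m" for i
  proof -
    have "bitv r m i v = bitv r m i w" using b that by simp
    moreover have "Sset r m i = insert i {..<r}" using that unfolding Sset_def by simp
    ultimately show ?thesis unfolding bitv_def v w a_def a'_def using that
      by (simp add: par_insert)
  qed
  have pu: "odd (card (x \<inter> {r..<2*r})) = odd (card (x' \<inter> {r..<2*r}))"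
  proof (cases "a = a'")
    case True
    then have "x \<inter> {r..<2*r} = x' \<inter> {r..<2*r}" using hi r(2) by auto
    then show ?thesis by simp
  next
    case False
    have eq: "x' \<inter> {r..<2*r} = {r..<2*r} - (x \<inter> {r..<2*r})"
    proof (rule set_eqI)
      fix z show "z \<in> x' \<inter> {r..<2*r} \<longleftrightarrow> z \<in> {r..<2*r} - (x \<inter> {r..<2*r})"
      proof (cases "z \<in> {r..<2*r}")
        case True
        then have "r \<le> z" "z < m" using r(2) by auto
        then show ?thesis using hi[of z] False True by auto
      qed auto
    qed
    have "card (x' \<inter> {r..<2*r}) = r - card (x \<inter> {r..<2*r})"
      unfolding eq by (subst card_Diff_subset) auto
    moreover have "card (x \<inter> {r..<2*r}) \<le> r"
      by (metis Int_lower2 card_atLeastLessThan card_mono diff_add_inverse finite_atLeastLessThan mult_2)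
    ultimately show ?thesis using r(1) by auto
  qed
  have lo: "(i \<in> x) = (i \<in> x')" if "i < r" for i
  proof -
    have "i < m" using that r(2) by simp
    then have "bitv r m i v = bitv r m i w" using b by simp
    moreover have "Sset r m i = insert i {r..<2*r}" using that \<open>i < m\<close> unfolding Sset_def by simp
    ultimately show ?thesis unfolding bitv_def v w using that pu \<open>i < m\<close>
      by (simp add: par_insert) blast
  qed
  then have "x \<inter> {..<r} = x' \<inter> {..<r}" by auto
  then have aa: "a = a'" unfolding a_def a'_def by simp
  have "(i \<in> x) = (i \<in> x')" if "i < m" for i
  proof (cases "i < r")
    case True then show ?thesis using lo by simp
  next
    case False then show ?thesis using hi[of i] that aa by simp blast
  qed
  then have xx: "x = x'" using xs by blast
  have "bitv r m m v = bitv r m m w" using b by simp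
  moreover have "Sset r m m = {..<r}" unfolding Sset_def by simp
  ultimately have "c = c'" unfolding bitv_def v w using xx by simp blast
  then show ?thesis using v w xx by simp
qed

lemma V_finite: "finite (twoQ_verts m)"
  unfolding twoQ_verts_def hypercube_verts_def by simp

lemma V_card: "card (twoQ_verts m) = 2 ^ Suc m"
  unfolding twoQ_verts_def hypercube_verts_def
  by (simp add: card_cartesian_product card_Pow)

lemma lab_bij:
  assumes "even r" "2 * r \<le> m"
  shows "bij_betw (lab r m) (twoQ_verts m) {1..card (twoQ_verts m)}"
proof -
  let ?h = "\<lambda>v. \<Sum>k<Suc m. 2^k * (if bitv r m k v then 1 else 0::nat)"
  have b: "bij_betw ?h (twoQ_verts m) {..<2 ^ Suc m}"
  proof (rule bin_bij[OF V_finite V_card])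
    fix v w assume "v \<in> twoQ_verts m" "w \<in> twoQ_verts m" "\<forall>k<Suc m. bitv r m k v = bitv r m k w"
    then show "v = w" by (rule recover[OF assms])
  qed
  have l: "lab r m = Suc \<circ> ?h" unfolding lab_def by auto
  have s: "bij_betw Suc {..<2 ^ Suc m} {1..2 ^ Suc m}"
    by (simp add: bij_betw_def image_Suc_lessThan)
  show ?thesis unfolding l V_card by (rule bij_betw_trans[OF b s])
qed

lemma g_bij:
  assumes "even r" "2 * r \<le> m"
  shows "bij_betw (g r m) (twoQ_verts m) {..<card (twoQ_verts m)}"
proof -
  have "bij_betw (\<lambda>v. \<Sum>k<Suc m. 2^k * (if (bitv r m k v \<longleftrightarrow> k = m) then 1 else 0::nat))
      (twoQ_verts m) {..<2 ^ Suc m}"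
  proof (rule bin_bij[OF V_finite V_card])
    fix v w assume "v \<in> twoQ_verts m" "w \<in> twoQ_verts m"
      "\<forall>k<Suc m. (bitv r m k v \<longleftrightarrow> k = m) = (bitv r m k w \<longleftrightarrow> k = m)"
    then have "\<forall>k<Suc m. bitv r m k v = bitv r m k w" by blast
    then show "v = w" using \<open>v \<in> twoQ_verts m\<close> \<open>w \<in> twoQ_verts m\<close> recover[OF assms] by blast
  qed
  then show ?thesis unfolding g_def V_card .
qed

lemma antimagic_from:
  assumes f: "bij_betw f V {1..card V}" and w: "\<And>v. v \<in> V \<Longrightarrow> weight V E D f v = C + int (h v)"
    and h: "bij_betw h V {..<card V}"
  shows "D_antimagic_labeling V E D f C 1"
proof -
  have i: "inj_on h V" using h by (simp add: bij_betw_def)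
  have "inj_on (weight V E D f) V"
  proof (rule inj_onI)
    fix v u assume "v \<in> V" "u \<in> V" "weight V E D f v = weight V E D f u"
    then have "h v = h u" using w by simp
    then show "v = u" using i \<open>v \<in> V\<close> \<open>u \<in> V\<close> by (simp add: inj_on_def)
  qed
  moreover have "weight V E D f ` V = (\<lambda>k. C + int k) ` (h ` V)"
    using w by (simp add: image_image cong: image_cong)
  moreover have "h ` V = {..<card V}" using h by (simp add: bij_betw_def)
  moreover have "(\<lambda>k. C + int k) ` {..<card V} = {C + int k * 1 | k. k < card V}" by auto
  ultimately show ?thesis unfolding D_antimagic_labeling_def using f by simp
qed

lemma geo_int: "int (\<Sum>k<n. (2::nat)^k) = 2^n - 1"
proof -
  have "int (\<Sum>k<n. (2::nat)^k) + 1 = int (2^n)" using arg_cong[OF geo[of n], of int] by simp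
  then show ?thesis by simp
qed

theorem theorem3p11:
  fixes n :: nat
  shows "(n mod 4 = 2 \<longrightarrow>
            distance_antimagic (twoQ_verts (n - 1)) twoQ_adj
              (int n * (2 ^ n + 1) div 2 - 2 ^ n) 1)
       \<and> (n mod 4 = 1 \<longrightarrow>
            closed_distance_antimagic (twoQ_verts (n - 1)) twoQ_adj
              ((int n + 1) * (2 ^ n + 1) div 2 - 2 ^ n) 1)"
proof (intro conjI impI)
  assume "n mod 4 = 2"
  then obtain t where n: "n = 4 * t + 2" by (metis mod_div_mult_eq add.commute mult.commute)
  define m where "m = 4 * t + 1"
  define r where "r = 2 * t"
  have mn: "n - 1 = m" "Suc m = n" unfolding m_def n by simp_all
  have mr: "m = 2 * r + 1" "even r" "2 * r \<le> m" unfolding m_def r_def by simp_all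
  define X :: int where "X = 2 ^ n"
  have alpha: "int n * (2 ^ n + 1) div 2 - 2 ^ n = int m + int r * (X - 1)"
  proof -
    have "int n * (2 ^ n + 1) = 2 * ((2 * int t + 1) * (X + 1))" unfolding X_def n by (simp add: algebra_simps)
    then have "int n * (2 ^ n + 1) div 2 = (2 * int t + 1) * (X + 1)" by simp
    then show ?thesis unfolding m_def r_def X_def by (simp add: algebra_simps)
  qed
  have "D_antimagic_labeling (twoQ_verts m) twoQ_adj {1} (lab r m) (int m + int r * (X - 1)) 1"
  proof (rule antimagic_from[OF lab_bij[OF mr(2,3)] _ g_bij[OF mr(2,3)]])
    fix v assume v: "v \<in> twoQ_verts m"
    obtain c x where vv: "v = (c, x)" by (cases v)
    have "weight (twoQ_verts m) twoQ_adj {1} (lab r m) v = (\<Sum>i<m. int (lab r m (fst v, flip i (snd v))))"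
      by (rule weight1[OF v])
    also have "\<dots> = int (\<Sum>i<m. lab r m (c, flip i x))"
      unfolding vv by simp
    also have "\<dots> = int m + int r * int (\<Sum>k<Suc m. 2^k) + int (g r m (c, x))"
      unfolding wdist[OF mr(1)] by simp
    finally show "weight (twoQ_verts m) twoQ_adj {1} (lab r m) v = int m + int r * (X - 1) + int (g r m v)"
      unfolding vv geo_int X_def mn(2) .
  qed
  then show "distance_antimagic (twoQ_verts (n - 1)) twoQ_adj (int n * (2 ^ n + 1) div 2 - 2 ^ n) 1"
    unfolding distance_antimagic_def alpha mn(1) by blast
next
  assume "n mod 4 = 1"
  then obtain t where n: "n = 4 * t + 1" by (metis mod_div_mult_eq add.commute mult.commute)
  define m where "m = 4 * t"
  define r where "r = 2 * t"
  have mn: "n - 1 = m" "Suc m = n" unfolding m_def n by simp_all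
  have mr: "m = 2 * r" "even r" "2 * r \<le> m" unfolding m_def r_def by simp_all
  define X :: int where "X = 2 ^ n"
  have alpha: "(int n + 1) * (2 ^ n + 1) div 2 - 2 ^ n = int m + 1 + int r * (X - 1)"
  proof -
    have "(int n + 1) * (2 ^ n + 1) = 2 * ((2 * int t + 1) * (X + 1))" unfolding X_def n by (simp add: algebra_simps)
    then have "(int n + 1) * (2 ^ n + 1) div 2 = (2 * int t + 1) * (X + 1)" by simp
    then show ?thesis unfolding m_def r_def X_def by (simp add: algebra_simps)
  qed
  have "D_antimagic_labeling (twoQ_verts m) twoQ_adj {0,1} (lab r m) (int m + 1 + int r * (X - 1)) 1"
  proof (rule antimagic_from[OF lab_bij[OF mr(2,3)] _ g_bij[OF mr(2,3)]])
    fix v assume v: "v \<in> twoQ_verts m"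
    obtain c x where vv: "v = (c, x)" by (cases v)
    have "weight (twoQ_verts m) twoQ_adj {0,1} (lab r m) v = int (lab r m v) + (\<Sum>i<m. int (lab r m (fst v, flip i (snd v))))"
      by (rule weight01[OF v])
    also have "\<dots> = int (lab r m (c, x) + (\<Sum>i<m. lab r m (c, flip i x)))"
      unfolding vv by simp
    also have "\<dots> = int m + 1 + int r * int (\<Sum>k<Suc m. 2^k) + int (g r m (c, x))"
      unfolding wclosed[OF mr(1)] by simp
    finally show "weight (twoQ_verts m) twoQ_adj {0,1} (lab r m) v = int m + 1 + int r * (X - 1) + int (g r m v)"
      unfolding vv geo_int X_def mn(2) .
  qed
  then show "closed_distance_antimagic (twoQ_verts (n - 1)) twoQ_adj ((int n + 1) * (2 ^ n + 1) div 2 - 2 ^ n) 1"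
    unfolding closed_distance_antimagic_def alpha mn(1) by blast
qed

end
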